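(* Assume (A-2). Then the following hold. (a) For every $\gamma>0$ there exists a unique $\xi(\gamma)\in(0,1/b(0))$ satisfying $$\int_0^\gamma\Big(\frac{b(x)\xi(\gamma)}{1-b(x)\xi(\gamma)}\Big)^2dx=1.$$ The map $\gamma\mapsto\xi(\gamma)$ on $(0,\infty)$ is non-increasing and continuous. (b) There exists a unique $\xi(\infty)\in(0,1/b(0))$ satisfying $\int_0^\infty\big(\frac{b(x)\xi(\infty)}{1-b(x)\xi(\infty)}\big)^2dx=1$, and $\lim_{\gamma\to\infty}\xi(\gamma)=\xi(\infty)$. (c) $\lim_{\gamma\to\infty}\psi\big(1/\xi(\gamma)\big)=\psi\big(1/\xi(\infty)\big)$.
   Context: Assumption (A-2): $b:[0,\infty)\to[0,\infty)$ is non-increasing, satisfies $b(0)>0$, is Lipschitz continuous at $0$, and satisfies $\int_0^\infty b(x)\,dx<\infty$. For $y>b(0)$, set $\psi(y)=y\big(1+\int_0^\infty\frac{b(x)}{y-b(x)}\,dx\big)$. *)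

theory Defs
  imports "HOL-Analysis.Analysis"
begin

definition assumption_A2 :: "(real \<Rightarrow> real) \<Rightarrow> bool" where
  "assumption_A2 b \<longleftrightarrow>
     (\<forall>x\<ge>0. b x \<ge> 0) \<and>
     (\<forall>x y. 0 \<le> x \<longrightarrow> x \<le> y \<longrightarrow> b y \<le> b x) \<and>
     b 0 > 0 \<and>
     (\<exists>L \<delta>. \<delta> > 0 \<and> (\<forall>x\<in>{0..\<delta>}. \<bar>b x - b 0\<bar> \<le> L * x)) \<and>
     b integrable_on {0..}"

definition xi_integrand :: "(real \<Rightarrow> real) \<Rightarrow> real \<Rightarrow> real \<Rightarrow> real" where
  "xi_integrand b \<xi> x = (b x * \<xi> / (1 - b x * \<xi>))^2"

definition xi_eq :: "(real \<Rightarrow> real) \<Rightarrow> real set \<Rightarrow> real \<Rightarrow> bool" where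
  "xi_eq b S \<xi> \<longleftrightarrow> \<xi> \<in> {0<..<1 / b 0} \<and> (xi_integrand b \<xi> has_integral 1) S"

definition xi :: "(real \<Rightarrow> real) \<Rightarrow> real \<Rightarrow> real" where
  "xi b \<gamma> = (THE \<xi>. xi_eq b {0..\<gamma>} \<xi>)"

definition xi_inf :: "(real \<Rightarrow> real) \<Rightarrow> real" where
  "xi_inf b = (THE \<xi>. xi_eq b {0..} \<xi>)"

definition psi :: "(real \<Rightarrow> real) \<Rightarrow> real \<Rightarrow> real" where
  "psi b y = y * (1 + integral {0..} (\<lambda>x. b x / (y - b x)))"

end

theory Submission
  imports Defs
begin


lemma A2_facts:
  assumes "assumption_A2 b"
  shows "\<And>x. 0 \<le> x \<Longrightarrow> 0 \<le> b x" "\<And>x y. 0 \<le> x \<Longrightarrow> x \<le> y \<Longrightarrow> b y \<le> b x"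
    "b 0 > 0" "b integrable_on {0..}" "\<And>x. 0 \<le> x \<Longrightarrow> b x \<le> b 0"
    "\<exists>L \<delta>. L > 0 \<and> \<delta> > 0 \<and> (\<forall>x\<in>{0..\<delta>}. b 0 - L * x \<le> b x)"
proof -
  show "\<And>x. 0 \<le> x \<Longrightarrow> 0 \<le> b x" "\<And>x y. 0 \<le> x \<Longrightarrow> x \<le> y \<Longrightarrow> b y \<le> b x"
    "b 0 > 0" "b integrable_on {0..}" "\<And>x. 0 \<le> x \<Longrightarrow> b x \<le> b 0"
    using assms unfolding assumption_A2_def by auto
  obtain L \<delta> where L: "\<delta> > 0" "\<forall>x\<in>{0..\<delta>}. \<bar>b x - b 0\<bar> \<le> L * x"
    using assms unfolding assumption_A2_def by auto
  have "\<forall>x\<in>{0..\<delta>}. b 0 - max L 1 * x \<le> b x"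
  proof
    fix x assume x: "x \<in> {0..\<delta>}"
    have "L * x \<le> max L 1 * x" using x by (intro mult_right_mono) auto
    then show "b 0 - max L 1 * x \<le> b x" using L(2) x by force
  qed
  then show "\<exists>L \<delta>. L > 0 \<and> \<delta> > 0 \<and> (\<forall>x\<in>{0..\<delta>}. b 0 - L * x \<le> b x)"
    using L(1) by (intro exI[of _ "max L 1"] exI[of _ \<delta>]) auto
qed

lemma phi_int_interval:
  fixes \<phi> :: "real \<Rightarrow> real"
  assumes A: "assumption_A2 b" and mono: "mono_on {0..b 0} \<phi>" and a: "0 \<le> a"
  shows "(\<lambda>x. \<phi> (b x)) integrable_on {a..c}"
proof -
  have "mono_on {a..c} (\<lambda>x. - \<phi> (b x))"
  proof (rule mono_onI)
    fix r s assume rs: "r \<in> {a..c}" "s \<in> {a..c}" "r \<le> s"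
    have "\<phi> (b s) \<le> \<phi> (b r)"
      using rs a A2_facts[OF A] by (intro mono_onD[OF mono]) auto
    then show "- \<phi> (b r) \<le> - \<phi> (b s)" by simp
  qed
  then have "(\<lambda>x. - \<phi> (b x)) integrable_on {a..c}" by (rule integrable_on_mono_on)
  then have "(\<lambda>x. - (- \<phi> (b x))) integrable_on {a..c}" by (rule integrable_neg)
  then show ?thesis by simp
qed

lemma phi_int_Ici:
  fixes \<phi> :: "real \<Rightarrow> real"
  assumes A: "assumption_A2 b" and mono: "mono_on {0..b 0} \<phi>"
    and bd: "\<And>t. t \<in> {0..b 0} \<Longrightarrow> 0 \<le> \<phi> t \<and> \<phi> t \<le> C * t"
  shows "(\<lambda>x. \<phi> (b x)) integrable_on {0..}"
proof (rule integrable_on_all_intervals_integrable_bound[where g="\<lambda>x. C * b x"])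
  fix u v :: real
  have "(\<lambda>x. \<phi> (b x)) integrable_on {max 0 u..v}"
    by (rule phi_int_interval[OF A mono]) auto
  moreover have "{0..} \<inter> cbox u v = {max 0 u..v}" by auto
  ultimately show "(\<lambda>x. if x \<in> {0..} then \<phi> (b x) else 0) integrable_on cbox u v"
    using integrable_restrict_Int[of "{0..}" "\<lambda>x. \<phi> (b x)" "cbox u v"] by simp
next
  fix x :: real assume "x \<in> {0..}"
  then have "b x \<in> {0..b 0}" using A2_facts[OF A] by auto
  then show "norm (\<phi> (b x)) \<le> C * b x" using bd by auto
next
  show "(\<lambda>x. C * b x) integrable_on {0..}"
    using integrable_on_cmult_left[OF A2_facts(4)[OF A], of C] by simp
qed



lemma h_mono:
  fixes u1 u2 :: real
  assumes "0 \<le> u1" "u1 \<le> u2" "u2 < 1"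
  shows "u1 / (1 - u1) \<le> u2 / (1 - u2)"
  using assms by (intro frac_le) auto

lemma h_nonneg:
  fixes u :: real
  assumes "0 \<le> u" "u < 1"
  shows "0 \<le> u / (1 - u)"
  using assms by simp

lemma g_bound:
  fixes t B \<xi> :: real
  assumes "0 \<le> t" "t \<le> B" "0 \<le> \<xi>" "B * \<xi> < 1"
  shows "(t * \<xi> / (1 - t * \<xi>))^2 \<le> (B * \<xi>^2 / (1 - B * \<xi>)^2) * t"
proof -
  have tx: "t * \<xi> \<le> B * \<xi>" using assms by (intro mult_right_mono) auto
  have pos: "0 < 1 - B * \<xi>" using assms by simp
  have le: "(1 - B * \<xi>)^2 \<le> (1 - t * \<xi>)^2" using tx pos by (intro power_mono) auto
  have "t * \<xi>^2 / (1 - t * \<xi>)^2 \<le> B * \<xi>^2 / (1 - B * \<xi>)^2"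
    using assms le pos by (intro frac_le mult_right_mono) auto
  then have "t * (t * \<xi>^2 / (1 - t * \<xi>)^2) \<le> t * (B * \<xi>^2 / (1 - B * \<xi>)^2)"
    using assms by (intro mult_left_mono) auto
  moreover have "(t * \<xi> / (1 - t * \<xi>))^2 = t * (t * \<xi>^2 / (1 - t * \<xi>)^2)"
    by (simp add: power2_eq_square)
  ultimately show ?thesis by (simp add: mult.commute)
qed

lemma xi_range:
  assumes A: "assumption_A2 b" and "0 \<le> \<xi>" "\<xi> < 1 / b 0"
  shows "b 0 * \<xi> < 1"
  using assms A2_facts(3)[OF A] by (simp add: field_simps)

lemma integrand_phi_props:
  assumes A: "assumption_A2 b" and xi: "0 \<le> \<xi>" "\<xi> < 1 / b 0"
  shows "mono_on {0..b 0} (\<lambda>t. (t * \<xi> / (1 - t * \<xi>))^2)"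
    and "\<And>t. t \<in> {0..b 0} \<Longrightarrow> 0 \<le> (t * \<xi> / (1 - t * \<xi>))^2 \<and>
           (t * \<xi> / (1 - t * \<xi>))^2 \<le> (b 0 * \<xi>^2 / (1 - b 0 * \<xi>)^2) * t"
proof -
  have B: "b 0 * \<xi> < 1" by (rule xi_range[OF A xi])
  show "mono_on {0..b 0} (\<lambda>t. (t * \<xi> / (1 - t * \<xi>))^2)"
  proof (rule mono_onI)
    fix r s assume rs: "r \<in> {0..b 0}" "s \<in> {0..b 0}" "r \<le> s"
    have "s * \<xi> \<le> b 0 * \<xi>" using rs xi by (intro mult_right_mono) auto
    moreover have "r * \<xi> \<le> s * \<xi>" using rs xi by (intro mult_right_mono) auto
    ultimately have "r * \<xi> / (1 - r * \<xi>) \<le> s * \<xi> / (1 - s * \<xi>)"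
      using rs xi B by (intro h_mono) auto
    moreover have "0 \<le> r * \<xi> / (1 - r * \<xi>)"
      using rs xi B \<open>r * \<xi> \<le> s * \<xi>\<close> \<open>s * \<xi> \<le> b 0 * \<xi>\<close> by (intro h_nonneg) auto
    ultimately show "(r * \<xi> / (1 - r * \<xi>))^2 \<le> (s * \<xi> / (1 - s * \<xi>))^2"
      by (intro power_mono) auto
  qed
  fix t assume t: "t \<in> {0..b 0}"
  show "0 \<le> (t * \<xi> / (1 - t * \<xi>))^2 \<and>
           (t * \<xi> / (1 - t * \<xi>))^2 \<le> (b 0 * \<xi>^2 / (1 - b 0 * \<xi>)^2) * t"
    using g_bound[of t "b 0" \<xi>] t xi B by auto
qed

lemma integrand_int:
  assumes A: "assumption_A2 b" and xi: "0 \<le> \<xi>" "\<xi> < 1 / b 0"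
  shows "\<And>a c. 0 \<le> a \<Longrightarrow> xi_integrand b \<xi> integrable_on {a..c}"
    and "xi_integrand b \<xi> integrable_on {0..}"
proof -
  have eq: "xi_integrand b \<xi> = (\<lambda>x. (\<lambda>t. (t * \<xi> / (1 - t * \<xi>))^2) (b x))"
    by (simp add: xi_integrand_def fun_eq_iff)
  show "\<And>a c. 0 \<le> a \<Longrightarrow> xi_integrand b \<xi> integrable_on {a..c}"
    unfolding eq by (rule phi_int_interval[OF A integrand_phi_props(1)[OF A xi]])
  show "xi_integrand b \<xi> integrable_on {0..}"
    unfolding eq by (rule phi_int_Ici[OF A integrand_phi_props(1)[OF A xi] integrand_phi_props(2)[OF A xi]])
qed

lemma integrand_nonneg: "0 \<le> xi_integrand b \<xi> x"
  by (simp add: xi_integrand_def)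

lemma integrand_mono:
  assumes A: "assumption_A2 b" and xi: "0 \<le> \<xi>1" "\<xi>1 \<le> \<xi>2" "\<xi>2 < 1 / b 0" and x: "0 \<le> x"
  shows "xi_integrand b \<xi>1 x \<le> xi_integrand b \<xi>2 x"
proof -
  have B: "b 0 * \<xi>2 < 1" by (rule xi_range[OF A]) (use xi in auto)
  have bx: "0 \<le> b x" "b x \<le> b 0" using A2_facts[OF A] x by auto
  have "b x * \<xi>2 \<le> b 0 * \<xi>2" using bx xi by (intro mult_right_mono) auto
  moreover have "b x * \<xi>1 \<le> b x * \<xi>2" using bx xi by (intro mult_left_mono) auto
  ultimately have "b x * \<xi>1 / (1 - b x * \<xi>1) \<le> b x * \<xi>2 / (1 - b x * \<xi>2)"
    "0 \<le> b x * \<xi>1 / (1 - b x * \<xi>1)"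
    using bx xi B by (auto intro!: h_mono h_nonneg)
  then show ?thesis unfolding xi_integrand_def by (intro power_mono) auto
qed



lemma h_diff:
  fixes u1 u2 :: real
  assumes "u1 < 1" "u2 < 1"
  shows "u2 / (1 - u2) - u1 / (1 - u1) = (u2 - u1) / ((1 - u1) * (1 - u2))"
  using assms by (simp add: field_simps)

lemma g_diff_lower:
  fixes u1 u2 :: real
  assumes "0 \<le> u1" "u1 \<le> u2" "u2 < 1"
  shows "u2^2 - u1^2 \<le> (u2 / (1 - u2))^2 - (u1 / (1 - u1))^2"
proof -
  define h1 where "h1 = u1 / (1 - u1)"
  define h2 where "h2 = u2 / (1 - u2)"
  have d: "(1 - u1) * (1 - u2) \<le> 1" "0 < (1 - u1) * (1 - u2)"
    using assms by (auto intro!: mult_le_one)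
  have "u2 - u1 \<le> (u2 - u1) / ((1 - u1) * (1 - u2))"
  proof -
    have "(u2 - u1) * ((1 - u1) * (1 - u2)) \<le> (u2 - u1) * 1"
      using d assms by (intro mult_left_mono) auto
    then show ?thesis using d by (simp add: le_divide_eq)
  qed
  then have 1: "u2 - u1 \<le> h2 - h1" unfolding h1_def h2_def using h_diff[of u1 u2] assms by simp
  have "u1 * (1 - u1) \<le> u1" "u2 * (1 - u2) \<le> u2" using assms by (auto simp: algebra_simps)
  then have "u1 \<le> h1" "u2 \<le> h2" unfolding h1_def h2_def using assms by (auto simp add: le_divide_eq)
  then have 2: "u2 + u1 \<le> h2 + h1" by simp
  have "(u2 - u1) * (u2 + u1) \<le> (h2 - h1) * (h2 + h1)"
    using 1 2 assms by (intro mult_mono) auto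
  then show ?thesis unfolding h1_def[symmetric] h2_def[symmetric]
    by (simp add: power2_eq_square algebra_simps)
qed

lemma h_lip:
  fixes u1 u2 m :: real
  assumes "0 \<le> u1" "u1 \<le> m" "0 \<le> u2" "u2 \<le> m" "m < 1"
  shows "\<bar>u2 / (1 - u2) - u1 / (1 - u1)\<bar> \<le> \<bar>u2 - u1\<bar> / (1 - m)^2"
proof -
  have le: "(1 - m)^2 \<le> (1 - u1) * (1 - u2)" unfolding power2_eq_square
    using assms by (intro mult_mono) auto
  have pos: "0 < (1 - m)^2" using assms by simp
  have "\<bar>u2 / (1 - u2) - u1 / (1 - u1)\<bar> = \<bar>u2 - u1\<bar> / ((1 - u1) * (1 - u2))"
    using h_diff[of u1 u2] assms by (simp add: abs_divide abs_mult)
  also have "\<dots> \<le> \<bar>u2 - u1\<bar> / (1 - m)^2"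
    using le pos assms by (intro divide_left_mono) (auto intro!: mult_pos_pos)
  finally show ?thesis .
qed

lemma g_lip:
  fixes u1 u2 m :: real
  assumes "0 \<le> u1" "u1 \<le> m" "0 \<le> u2" "u2 \<le> m" "m < 1"
  shows "\<bar>(u2 / (1 - u2))^2 - (u1 / (1 - u1))^2\<bar> \<le> (2 * m / (1 - m)^3) * \<bar>u2 - u1\<bar>"
proof -
  define h1 where "h1 = u1 / (1 - u1)"
  define h2 where "h2 = u2 / (1 - u2)"
  have a: "\<bar>h2 - h1\<bar> \<le> \<bar>u2 - u1\<bar> / (1 - m)^2" unfolding h1_def h2_def by (rule h_lip[OF assms])
  have "h1 \<le> m / (1 - m)" unfolding h1_def using assms by (intro h_mono) auto
  moreover have "h2 \<le> m / (1 - m)" unfolding h2_def using assms by (intro h_mono) auto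
  moreover have "0 \<le> h1" "0 \<le> h2" unfolding h1_def h2_def using assms by auto
  ultimately have b: "\<bar>h2 + h1\<bar> \<le> 2 * m / (1 - m)" by simp
  have "\<bar>h2^2 - h1^2\<bar> = \<bar>h2 - h1\<bar> * \<bar>h2 + h1\<bar>"
    by (simp add: power2_eq_square algebra_simps abs_mult[symmetric])
  also have "\<dots> \<le> (\<bar>u2 - u1\<bar> / (1 - m)^2) * (2 * m / (1 - m))"
    using a b by (intro mult_mono) auto
  also have "\<dots> = (2 * m / (1 - m)^3) * \<bar>u2 - u1\<bar>"
    using assms by (simp add: field_simps power2_eq_square power3_eq_cube)
  finally show ?thesis unfolding h1_def h2_def .
qed



lemma F_mono:
  assumes A: "assumption_A2 b" and S: "S \<subseteq> {0..}"
    and xi: "0 \<le> \<xi>1" "\<xi>1 \<le> \<xi>2" "\<xi>2 < 1 / b 0"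
    and i1: "xi_integrand b \<xi>1 integrable_on S" and i2: "xi_integrand b \<xi>2 integrable_on S"
  shows "integral S (xi_integrand b \<xi>1) \<le> integral S (xi_integrand b \<xi>2)"
  using i1 i2 by (rule integral_le) (use S integrand_mono[OF A xi] in auto)

lemma b_half:
  assumes A: "assumption_A2 b"
  shows "\<exists>h>0. \<forall>x\<in>{0..h}. b 0 / 2 \<le> b x"
proof -
  obtain L \<delta> where L: "L > 0" "\<delta> > 0" "\<forall>x\<in>{0..\<delta>}. b 0 - L * x \<le> b x"
    using A2_facts(6)[OF A] by auto
  have B: "b 0 > 0" using A2_facts(3)[OF A] .
  define h where "h = min \<delta> (b 0 / (2 * L))"
  have "h > 0" unfolding h_def using L B by auto
  moreover have "b 0 / 2 \<le> b x" if x: "x \<in> {0..h}" for x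
  proof -
    have "L * x \<le> L * (b 0 / (2 * L))" using x L unfolding h_def by (intro mult_left_mono) auto
    also have "\<dots> = b 0 / 2" using L by simp
    finally show ?thesis using L(3) x unfolding h_def by force
  qed
  ultimately show ?thesis by blast
qed

lemma F_strict:
  assumes A: "assumption_A2 b" and S: "S \<subseteq> {0..}" and g: "\<gamma> > 0" "{0..\<gamma>} \<subseteq> S"
    and xi: "0 \<le> \<xi>1" "\<xi>1 < \<xi>2" "\<xi>2 < 1 / b 0"
    and i1: "xi_integrand b \<xi>1 integrable_on S" and i2: "xi_integrand b \<xi>2 integrable_on S"
  shows "integral S (xi_integrand b \<xi>1) < integral S (xi_integrand b \<xi>2)"
proof -
  obtain h0 where h0: "h0 > 0" "\<forall>x\<in>{0..h0}. b 0 / 2 \<le> b x" using b_half[OF A] by auto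
  define h where "h = min h0 \<gamma>"
  have h: "h > 0" "{0..h} \<subseteq> S" using h0 g unfolding h_def by auto
  define d where "d = (\<lambda>x. xi_integrand b \<xi>2 x - xi_integrand b \<xi>1 x)"
  define c where "c = (b 0 / 2)^2 * (\<xi>2^2 - \<xi>1^2)"
  have B: "b 0 > 0" using A2_facts(3)[OF A] .
  have "\<xi>1^2 < \<xi>2^2" using xi by (intro power_strict_mono) auto
  then have c: "c > 0" unfolding c_def using B by simp
  have dS: "d integrable_on S" unfolding d_def by (rule integrable_diff[OF i2 i1])
  have dh: "d integrable_on {0..h}" unfolding d_def
    using integrand_int(1)[OF A, of \<xi>1 0 h] integrand_int(1)[OF A, of \<xi>2 0 h] xi
    by (intro integrable_diff) auto
  have dnn: "\<forall>x\<in>S. 0 \<le> d x" unfolding d_def using integrand_mono[OF A, of \<xi>1 \<xi>2] xi S by force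
  have "integral S (xi_integrand b \<xi>2) - integral S (xi_integrand b \<xi>1) = integral S d"
    unfolding d_def using integral_diff[OF i2 i1] by simp
  also have "integral {0..h} d \<le> integral S d"
    using dh dS h dnn by (intro integral_subset_le) auto
  moreover have "integral {0..h} (\<lambda>x. c) \<le> integral {0..h} d"
  proof (rule integral_le)
    show "(\<lambda>x. c) integrable_on {0..h}" by (rule integrable_const_ivl)
    show "d integrable_on {0..h}" by (rule dh)
  next
    fix x assume x: "x \<in> {0..h}"
    have bx: "b 0 / 2 \<le> b x" "b x \<le> b 0" using h0 x A2_facts[OF A] unfolding h_def by auto
    have B2: "b 0 * \<xi>2 < 1" by (rule xi_range[OF A]) (use xi in auto)
    have "b x * \<xi>2 \<le> b 0 * \<xi>2" using bx xi by (intro mult_right_mono) auto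
    moreover have "b x * \<xi>1 \<le> b x * \<xi>2" using bx B xi by (intro mult_left_mono) auto
    moreover have "0 \<le> b x * \<xi>1" using bx B xi by simp
    ultimately have "(b x * \<xi>2)^2 - (b x * \<xi>1)^2 \<le> d x"
      unfolding d_def xi_integrand_def using B2 by (intro g_diff_lower) auto
    moreover have "c \<le> (b x * \<xi>2)^2 - (b x * \<xi>1)^2"
    proof -
      have "(b 0 / 2)^2 \<le> (b x)^2" using bx B by (intro power_mono) auto
      then have "(b 0 / 2)^2 * (\<xi>2^2 - \<xi>1^2) \<le> (b x)^2 * (\<xi>2^2 - \<xi>1^2)"
        using \<open>\<xi>1^2 < \<xi>2^2\<close> by (intro mult_right_mono) auto
      then show ?thesis unfolding c_def by (simp add: power_mult_distrib algebra_simps)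
    qed
    ultimately show "c \<le> d x" by simp
  qed
  moreover have "integral {0..h} (\<lambda>x. c) = h * c" using h by simp
  moreover have "h * c > 0" using h c by simp
  ultimately show ?thesis by linarith
qed

lemma F_lip:
  assumes A: "assumption_A2 b" and S: "S \<subseteq> {0..}" and bS: "b integrable_on S"
    and xi: "0 \<le> \<xi>1" "\<xi>1 \<le> d" "0 \<le> \<xi>2" "\<xi>2 \<le> d" "d < 1 / b 0"
    and i1: "xi_integrand b \<xi>1 integrable_on S" and i2: "xi_integrand b \<xi>2 integrable_on S"
  shows "dist (integral S (xi_integrand b \<xi>2)) (integral S (xi_integrand b \<xi>1))
     \<le> (2 * (b 0 * d) / (1 - b 0 * d)^3 * integral S b) * dist \<xi>2 \<xi>1"
proof -
  define K where "K = 2 * (b 0 * d) / (1 - b 0 * d)^3"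
  have B: "b 0 > 0" using A2_facts(3)[OF A] .
  have m: "b 0 * d < 1" by (rule xi_range[OF A]) (use xi in auto)
  have "norm (integral S (\<lambda>x. xi_integrand b \<xi>2 x - xi_integrand b \<xi>1 x))
      \<le> integral S (\<lambda>x. (K * \<bar>\<xi>2 - \<xi>1\<bar>) * b x)"
  proof (rule integral_norm_bound_integral)
    show "(\<lambda>x. xi_integrand b \<xi>2 x - xi_integrand b \<xi>1 x) integrable_on S"
      by (rule integrable_diff[OF i2 i1])
    show "(\<lambda>x. (K * \<bar>\<xi>2 - \<xi>1\<bar>) * b x) integrable_on S"
      using integrable_on_cmult_left[OF bS] by simp
  next
    fix x assume x: "x \<in> S"
    have bx: "0 \<le> b x" "b x \<le> b 0" using x S A2_facts[OF A] by auto
    have u: "0 \<le> b x * \<xi>1" "b x * \<xi>1 \<le> b 0 * d" "0 \<le> b x * \<xi>2" "b x * \<xi>2 \<le> b 0 * d"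
      using bx xi by (auto intro: mult_mono)
    have "\<bar>xi_integrand b \<xi>2 x - xi_integrand b \<xi>1 x\<bar> \<le> K * \<bar>b x * \<xi>2 - b x * \<xi>1\<bar>"
      unfolding xi_integrand_def K_def using g_lip[OF u m] by simp
    also have "\<dots> = (K * \<bar>\<xi>2 - \<xi>1\<bar>) * b x"
      using bx by (simp add: right_diff_distrib[symmetric] abs_mult)
    finally show "norm (xi_integrand b \<xi>2 x - xi_integrand b \<xi>1 x) \<le> (K * \<bar>\<xi>2 - \<xi>1\<bar>) * b x"
      by simp
  qed
  then show ?thesis
    unfolding K_def[symmetric] dist_real_def integral_diff[OF i2 i1, symmetric]
    by (simp add: algebra_simps)
qed

lemma F_cont:
  assumes A: "assumption_A2 b" and S: "S \<subseteq> {0..}" and bS: "b integrable_on S"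
    and d: "d < 1 / b 0" and d0: "0 \<le> d"
    and i: "\<And>\<xi>. 0 \<le> \<xi> \<Longrightarrow> \<xi> < 1 / b 0 \<Longrightarrow> xi_integrand b \<xi> integrable_on S"
  shows "continuous_on {0..d} (\<lambda>\<xi>. integral S (xi_integrand b \<xi>))"
proof (rule lipschitz_on_continuous_on)
  have m: "b 0 * d < 1" "0 < b 0" using A2_facts(3)[OF A] d by (auto simp: field_simps)
  have "0 \<le> integral S b" using bS S A2_facts(1)[OF A] by (intro integral_nonneg) auto
  show "(2 * (b 0 * d) / (1 - b 0 * d)^3 * integral S b)-lipschitz_on {0..d}
      (\<lambda>\<xi>. integral S (xi_integrand b \<xi>))"
  proof (rule lipschitz_onI)
    fix x y assume "x \<in> {0..d}" "y \<in> {0..d}"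
    then show "dist (integral S (xi_integrand b x)) (integral S (xi_integrand b y))
       \<le> 2 * (b 0 * d) / (1 - b 0 * d)^3 * integral S b * dist x y"
      using F_lip[OF A S bS, of y d x] i d by auto
  next
    show "0 \<le> 2 * (b 0 * d) / (1 - b 0 * d)^3 * integral S b"
      using m \<open>0 \<le> integral S b\<close> d0 by auto
  qed
qed



lemma diverge:
  assumes A: "assumption_A2 b" and g: "\<gamma> > 0"
  shows "\<exists>\<xi>. 0 < \<xi> \<and> \<xi> < 1 / b 0 \<and> integral {0..\<gamma>} (xi_integrand b \<xi>) > 1"
proof -
  obtain L \<delta> where L: "L > 0" "\<delta> > 0" "\<forall>x\<in>{0..\<delta>}. b 0 - L * x \<le> b x"
    using A2_facts(6)[OF A] by auto
  define B where "B = b 0"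
  have B: "B > 0" unfolding B_def using A2_facts(3)[OF A] .
  define h where "h = min \<delta> \<gamma>"
  have h: "h > 0" "h \<le> \<delta>" "h \<le> \<gamma>" using L g unfolding h_def by auto
  define \<epsilon> where "\<epsilon> = min (1/2) (min (L * h / B) (B / (128 * L)))"
  have e: "\<epsilon> > 0" "\<epsilon> \<le> 1/2" "\<epsilon> \<le> L * h / B" "\<epsilon> \<le> B / (128 * L)"
  proof -
    show "\<epsilon> \<le> 1/2" unfolding \<epsilon>_def by (rule min.cobounded1)
    show "\<epsilon> \<le> L * h / B" unfolding \<epsilon>_def by (metis min.cobounded1 min.coboundedI2)
    show "\<epsilon> \<le> B / (128 * L)" unfolding \<epsilon>_def by (metis min.cobounded2 min.coboundedI2)
    show "\<epsilon> > 0" unfolding \<epsilon>_def using L h B by simp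
  qed
  define \<xi> where "\<xi> = (1 - \<epsilon>) / B"
  have xi: "0 < \<xi>" "\<xi> < 1 / B" using e B unfolding \<xi>_def by (auto simp: field_simps)
  have Bxi: "B * \<xi> = 1 - \<epsilon>" unfolding \<xi>_def using B by simp
  define w where "w = \<epsilon> * B / L"
  have w: "w > 0" "w \<le> h" using e L B unfolding w_def by (auto simp: field_simps)
  have Lw: "L * w = \<epsilon> * B" unfolding w_def using L by simp
  have int: "xi_integrand b \<xi> integrable_on {0..\<gamma>}" "xi_integrand b \<xi> integrable_on {0..w}"
    using integrand_int(1)[OF A, of \<xi>] xi unfolding B_def by auto
  have lower: "1 / (64 * \<epsilon>^2) \<le> xi_integrand b \<xi> x" if x: "x \<in> {0..w}" for x
  proof -
    have x0: "0 \<le> x" "x \<le> w" using x by auto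
    have Lx: "L * x \<le> \<epsilon> * B" using Lw x0 L by (metis mult_left_mono less_imp_le)
    have bl: "B - L * x \<le> b x" using L(3) x0 w h unfolding B_def by auto
    have bu: "b x \<le> B" using A2_facts(5)[OF A] x0 unfolding B_def by auto
    define u where "u = b x * \<xi>"
    have "(B - L * x) * \<xi> \<le> u" unfolding u_def using bl xi by (intro mult_right_mono) auto
    moreover have "(B - L * x) * \<xi> = (1 - \<epsilon>) - L * x * \<xi>" using Bxi by (simp add: algebra_simps)
    moreover have "L * x * \<xi> \<le> \<epsilon> * B * \<xi>" using Lx xi by (intro mult_right_mono) auto
    moreover have "\<epsilon> * B * \<xi> = \<epsilon> * (1 - \<epsilon>)" using Bxi by (metis mult.assoc)
    moreover have "\<epsilon> * (1 - \<epsilon>) = \<epsilon> - \<epsilon> * \<epsilon>" by (simp add: algebra_simps)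
    moreover have "0 \<le> \<epsilon> * \<epsilon>" by simp
    ultimately have u1: "1 - 2 * \<epsilon> \<le> u" by linarith
    have u2: "u \<le> 1 - \<epsilon>" unfolding u_def using bu xi Bxi by (metis mult_right_mono less_imp_le)
    have u3: "1/4 \<le> u"
    proof -
      have "\<epsilon> * B \<le> (1/2) * B" using e B by (intro mult_right_mono) auto
      then have "B / 2 \<le> B - L * x" using Lx by linarith
      then have "B / 2 * \<xi> \<le> u" unfolding u_def using bl xi by (intro mult_right_mono) auto
      moreover have "B / 2 * \<xi> = (1 - \<epsilon>) / 2" using Bxi by simp
      moreover have "(1 - \<epsilon>) / 2 \<ge> 1/4" using e by simp
      ultimately show ?thesis by linarith
    qed
    have "(1/4) / (2 * \<epsilon>) \<le> u / (1 - u)"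
      using u1 u2 u3 e by (intro frac_le) auto
    moreover have "(1/4) / (2 * \<epsilon>) = 1 / (8 * \<epsilon>)" by simp
    ultimately have "(1 / (8 * \<epsilon>))^2 \<le> (u / (1 - u))^2" using e by (intro power_mono) auto
    moreover have "(1 / (8 * \<epsilon>))^2 = 1 / (64 * \<epsilon>^2)" by (simp add: power2_eq_square)
    ultimately show ?thesis unfolding xi_integrand_def u_def by simp
  qed
  have "integral {0..w} (\<lambda>x. 1 / (64 * \<epsilon>^2)) \<le> integral {0..w} (xi_integrand b \<xi>)"
    using int(2) lower by (intro integral_le) auto
  moreover have "integral {0..w} (xi_integrand b \<xi>) \<le> integral {0..\<gamma>} (xi_integrand b \<xi>)"
    using int w h by (intro integral_subset_le) (auto simp: integrand_nonneg)
  moreover have "integral {0..w} (\<lambda>x. 1 / (64 * \<epsilon>^2)) = B / (64 * L * \<epsilon>)"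
    using w e L unfolding w_def by (simp add: power2_eq_square field_simps)
  moreover have "B / (64 * L * \<epsilon>) \<ge> 2"
  proof -
    have "\<epsilon> * (128 * L) \<le> B" using e L by (simp add: field_simps)
    then show ?thesis using e L by (simp add: field_simps)
  qed
  ultimately show ?thesis using xi unfolding B_def by (intro exI[of _ \<xi>]) auto
qed



lemma xi_eq_F:
  assumes "xi_eq b S \<xi>"
  shows "0 < \<xi>" "\<xi> < 1 / b 0" "integral S (xi_integrand b \<xi>) = 1"
  using assms unfolding xi_eq_def by (auto intro: integral_unique)

lemma bracket:
  assumes A: "assumption_A2 b" and S: "S \<subseteq> {0..}" and g: "\<gamma> > 0" "{0..\<gamma>} \<subseteq> S"
    and i: "\<And>\<xi>. 0 \<le> \<xi> \<Longrightarrow> \<xi> < 1 / b 0 \<Longrightarrow> xi_integrand b \<xi> integrable_on S"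
    and e: "xi_eq b S \<xi>s" and a: "0 \<le> a" "a < 1 / b 0"
  shows "integral S (xi_integrand b a) < 1 \<Longrightarrow> a < \<xi>s"
    and "integral S (xi_integrand b a) > 1 \<Longrightarrow> \<xi>s < a"
    and "integral S (xi_integrand b a) \<le> 1 \<Longrightarrow> a \<le> \<xi>s"
    and "integral S (xi_integrand b a) \<ge> 1 \<Longrightarrow> \<xi>s \<le> a"
proof -
  note es = xi_eq_F[OF e]
  show "integral S (xi_integrand b a) < 1 \<Longrightarrow> a < \<xi>s"
    using F_mono[OF A S, of \<xi>s a] es a i by force
  show "integral S (xi_integrand b a) > 1 \<Longrightarrow> \<xi>s < a"
    using F_mono[OF A S, of a \<xi>s] es a i by force
  show "integral S (xi_integrand b a) \<le> 1 \<Longrightarrow> a \<le> \<xi>s"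
    using F_strict[OF A S g, of \<xi>s a] es a i by force
  show "integral S (xi_integrand b a) \<ge> 1 \<Longrightarrow> \<xi>s \<le> a"
    using F_strict[OF A S g, of a \<xi>s] es a i by force
qed

lemma ex1_S:
  assumes A: "assumption_A2 b" and S: "S \<subseteq> {0..}" and bS: "b integrable_on S"
    and g: "\<gamma> > 0" "{0..\<gamma>} \<subseteq> S"
    and i: "\<And>\<xi>. 0 \<le> \<xi> \<Longrightarrow> \<xi> < 1 / b 0 \<Longrightarrow> xi_integrand b \<xi> integrable_on S"
    and big: "\<exists>\<xi>. 0 < \<xi> \<and> \<xi> < 1 / b 0 \<and> integral S (xi_integrand b \<xi>) > 1"
  shows "\<exists>!\<xi>. xi_eq b S \<xi>"
proof -
  obtain \<xi>1 where x1: "0 < \<xi>1" "\<xi>1 < 1 / b 0" "integral S (xi_integrand b \<xi>1) > 1"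
    using big by auto
  have c: "continuous_on {0..\<xi>1} (\<lambda>\<xi>. integral S (xi_integrand b \<xi>))"
    by (rule F_cont[OF A S bS]) (use x1 i in auto)
  have "xi_integrand b 0 = (\<lambda>x. 0)" by (simp add: xi_integrand_def fun_eq_iff)
  then have z: "integral S (xi_integrand b 0) = 0" by simp
  obtain x where x: "0 \<le> x" "x \<le> \<xi>1" "integral S (xi_integrand b x) = 1"
    using IVT'[of "\<lambda>\<xi>. integral S (xi_integrand b \<xi>)" 0 1 \<xi>1, OF _ _ _ c] z x1 by auto
  have "x \<noteq> 0" using x z by auto
  then have e: "xi_eq b S x" unfolding xi_eq_def using x x1 i[of x]
    by (auto dest!: integrable_integral)
  show ?thesis
  proof (rule ex1I[of _ x])
    show "xi_eq b S x" by (rule e)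
    fix y assume y: "xi_eq b S y"
    have "x \<le> y" "y \<le> x"
      using bracket(3,4)[OF A S g i y, of x] bracket(3,4)[OF A S g i e, of y] xi_eq_F[OF y] xi_eq_F[OF e]
      by auto
    then show "y = x" by simp
  qed
qed

lemma Fgamma_cont:
  assumes A: "assumption_A2 b" and xi: "0 \<le> \<xi>" "\<xi> < 1 / b 0" and g: "\<gamma> > 0" and eta: "\<eta> > 0"
  shows "\<exists>d>0. \<forall>s. 0 < s \<longrightarrow> \<bar>s - \<gamma>\<bar> < d \<longrightarrow>
      \<bar>integral {0..s} (xi_integrand b \<xi>) - integral {0..\<gamma>} (xi_integrand b \<xi>)\<bar> < \<eta>"
proof -
  have "continuous_on {0..\<gamma>+1} (\<lambda>s. integral {0..s} (xi_integrand b \<xi>))"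
    by (rule indefinite_integral_continuous_1) (rule integrand_int(1)[OF A xi], simp)
  then obtain d where d: "d > 0" "\<forall>s\<in>{0..\<gamma>+1}. dist s \<gamma> < d \<longrightarrow>
      dist (integral {0..s} (xi_integrand b \<xi>)) (integral {0..\<gamma>} (xi_integrand b \<xi>)) < \<eta>"
    using g eta unfolding continuous_on_iff by (metis atLeastAtMost_iff less_add_one less_imp_le)
  show ?thesis
    by (rule exI[of _ "min d 1"]) (use d in \<open>auto simp: dist_real_def\<close>)
qed

lemma F_seq_lim:
  assumes A: "assumption_A2 b" and xi: "0 \<le> \<xi>" "\<xi> < 1 / b 0"
  shows "(\<lambda>n. integral {0..real n} (xi_integrand b \<xi>)) \<longlonglongrightarrow> integral {0..} (xi_integrand b \<xi>)"
proof -
  define f where "f = (\<lambda>k::nat. \<lambda>x::real. if x \<in> {0..real k} then xi_integrand b \<xi> x else 0)"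
  have eq: "integral {0..} (f k) = integral {0..real k} (xi_integrand b \<xi>)" for k
    unfolding f_def integral_restrict_Int by (metis Int_absorb2 atLeastAtMost_iff atLeast_iff subsetI)
  have "xi_integrand b \<xi> integrable_on {0..} \<and>
     ((\<lambda>k. integral {0..} (f k)) \<longlonglongrightarrow> integral {0..} (xi_integrand b \<xi>))"
  proof (rule monotone_convergence_increasing)
    fix k
    have "{0..real k} \<inter> {0..} = {0..real k}" by auto
    then show "f k integrable_on {0..}" unfolding f_def integrable_restrict_Int
      using integrand_int(1)[OF A xi, of 0 "real k"] by simp
  next
    fix k and x :: real assume "x \<in> {0..}"
    then show "f k x \<le> f (Suc k) x" unfolding f_def by (auto simp: integrand_nonneg)
  next
    fix x :: real assume x: "x \<in> {0..}"
    have "\<forall>\<^sub>F k in sequentially. f k x = xi_integrand b \<xi> x"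
      unfolding eventually_sequentially
    proof (intro exI[of _ "nat \<lceil>x\<rceil>"] allI impI)
      fix k assume "nat \<lceil>x\<rceil> \<le> k"
      then have "x \<le> real k" by linarith
      then show "f k x = xi_integrand b \<xi> x" using x unfolding f_def by auto
    qed
    then show "(\<lambda>k. f k x) \<longlonglongrightarrow> xi_integrand b \<xi> x" by (rule tendsto_eventually)
  next
    have "norm (integral {0..} (f k)) \<le> integral {0..} (xi_integrand b \<xi>)" for k
    proof -
      have "0 \<le> integral {0..real k} (xi_integrand b \<xi>)"
        using integrand_int(1)[OF A xi, of 0 "real k"] by (intro integral_nonneg) (auto simp: integrand_nonneg)
      moreover have "integral {0..real k} (xi_integrand b \<xi>) \<le> integral {0..} (xi_integrand b \<xi>)"
        using integrand_int[OF A xi] by (intro integral_subset_le) (auto simp: integrand_nonneg)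
      ultimately show ?thesis unfolding eq by simp
    qed
    then show "bounded (range (\<lambda>k. integral {0..} (f k)))"
      unfolding bounded_iff by blast
  qed
  then show ?thesis unfolding eq by simp
qed



lemma psi_int:
  assumes A: "assumption_A2 b" and xi: "0 < \<xi>" "\<xi> < 1 / b 0"
  shows "(\<lambda>x. b x / (1 / \<xi> - b x)) integrable_on {0..}"
proof -
  have B: "b 0 < 1 / \<xi>" using xi A2_facts(3)[OF A] by (simp add: field_simps)
  show ?thesis
  proof (rule phi_int_Ici[OF A, where \<phi>="\<lambda>t. t / (1 / \<xi> - t)" and C="1 / (1 / \<xi> - b 0)"])
    show "mono_on {0..b 0} (\<lambda>t. t / (1 / \<xi> - t))"
      by (rule mono_onI) (use B in \<open>auto intro!: frac_le\<close>)
  next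
    fix t assume t: "t \<in> {0..b 0}"
    have "t / (1 / \<xi> - t) \<le> t / (1 / \<xi> - b 0)" using t B by (intro divide_left_mono) auto
    then show "0 \<le> t / (1 / \<xi> - t) \<and> t / (1 / \<xi> - t) \<le> 1 / (1 / \<xi> - b 0) * t"
      using t B by auto
  qed
qed

lemma G_cont:
  assumes A: "assumption_A2 b" and cd: "0 < c" "c \<le> d" "d < 1 / b 0"
  shows "continuous_on {c..d} (\<lambda>\<xi>. integral {0..} (\<lambda>x. b x / (1 / \<xi> - b x)))"
proof (rule lipschitz_on_continuous_on)
  define m where "m = b 0 * d"
  have m: "m < 1" "0 \<le> m" unfolding m_def using xi_range[OF A, of d] cd A2_facts(3)[OF A] by auto
  have bI: "0 \<le> integral {0..} b" using A2_facts(1,4)[OF A] by (intro integral_nonneg) auto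
  show "(integral {0..} b / (1 - m)^2)-lipschitz_on {c..d} (\<lambda>\<xi>. integral {0..} (\<lambda>x. b x / (1 / \<xi> - b x)))"
  proof (rule lipschitz_onI)
    show "0 \<le> integral {0..} b / (1 - m)^2" using bI by simp
    fix \<xi>2 \<xi>1 assume x: "\<xi>2 \<in> {c..d}" "\<xi>1 \<in> {c..d}"
    have i1: "(\<lambda>x. b x / (1 / \<xi>1 - b x)) integrable_on {0..}" using psi_int[OF A, of \<xi>1] x cd by auto
    have i2: "(\<lambda>x. b x / (1 / \<xi>2 - b x)) integrable_on {0..}" using psi_int[OF A, of \<xi>2] x cd by auto
    have "norm (integral {0..} (\<lambda>x. b x / (1 / \<xi>2 - b x) - b x / (1 / \<xi>1 - b x)))
      \<le> integral {0..} (\<lambda>x. (\<bar>\<xi>2 - \<xi>1\<bar> / (1 - m)^2) * b x)"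
    proof (rule integral_norm_bound_integral)
      show "(\<lambda>x. b x / (1 / \<xi>2 - b x) - b x / (1 / \<xi>1 - b x)) integrable_on {0..}"
        by (rule integrable_diff[OF i2 i1])
      show "(\<lambda>x. (\<bar>\<xi>2 - \<xi>1\<bar> / (1 - m)^2) * b x) integrable_on {0..}"
        using integrable_on_cmult_left[OF A2_facts(4)[OF A], of "\<bar>\<xi>2 - \<xi>1\<bar> / (1 - m)^2"] by simp
    next
      fix x :: real assume "x \<in> {0..}"
      then have bx: "0 \<le> b x" "b x \<le> b 0" using A2_facts[OF A] by auto
      have u: "0 \<le> b x * \<xi>1" "b x * \<xi>1 \<le> m" "0 \<le> b x * \<xi>2" "b x * \<xi>2 \<le> m"
        unfolding m_def using bx x cd by (auto intro: mult_mono)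
      have eq: "b x / (1 / \<xi> - b x) = b x * \<xi> / (1 - b x * \<xi>)" if "\<xi> > 0" "b x * \<xi> < 1" for \<xi>
        using that by (simp add: field_simps)
      have "\<bar>b x * \<xi>2 / (1 - b x * \<xi>2) - b x * \<xi>1 / (1 - b x * \<xi>1)\<bar> \<le> \<bar>b x * \<xi>2 - b x * \<xi>1\<bar> / (1 - m)^2"
        by (rule h_lip[OF u m(1)])
      also have "\<dots> = (\<bar>\<xi>2 - \<xi>1\<bar> / (1 - m)^2) * b x"
        using bx by (simp add: right_diff_distrib[symmetric] abs_mult)
      finally show "norm (b x / (1 / \<xi>2 - b x) - b x / (1 / \<xi>1 - b x)) \<le> (\<bar>\<xi>2 - \<xi>1\<bar> / (1 - m)^2) * b x"
        using eq[of \<xi>1] eq[of \<xi>2] u m x cd by auto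
    qed
    then show "dist (integral {0..} (\<lambda>x. b x / (1 / \<xi>2 - b x))) (integral {0..} (\<lambda>x. b x / (1 / \<xi>1 - b x)))
       \<le> integral {0..} b / (1 - m)^2 * dist \<xi>2 \<xi>1"
      unfolding dist_real_def integral_diff[OF i2 i1, symmetric] by (simp add: algebra_simps)
  qed
qed

lemma psi_isCont:
  assumes A: "assumption_A2 b" and xi: "0 < \<xi>0" "\<xi>0 < 1 / b 0"
  shows "isCont (\<lambda>\<xi>. psi b (1 / \<xi>)) \<xi>0"
proof -
  define c where "c = \<xi>0 / 2"
  define d where "d = (\<xi>0 + 1 / b 0) / 2"
  have cd: "0 < c" "c < \<xi>0" "\<xi>0 < d" "d < 1 / b 0" unfolding c_def d_def using xi by auto
  have "continuous_on {c..d} (\<lambda>\<xi>. integral {0..} (\<lambda>x. b x / (1 / \<xi> - b x)))"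
    by (rule G_cont[OF A]) (use cd in auto)
  then have "isCont (\<lambda>\<xi>. integral {0..} (\<lambda>x. b x / (1 / \<xi> - b x))) \<xi>0"
    by (rule continuous_on_interior) (use cd in auto)
  then have "isCont (\<lambda>\<xi>. 1 / \<xi> * (1 + integral {0..} (\<lambda>x. b x / (1 / \<xi> - b x)))) \<xi>0"
    using xi by (intro continuous_intros) auto
  then show ?thesis unfolding psi_def .
qed



lemma brk0:
  fixes \<xi>0 U e :: real
  assumes "0 < \<xi>0" "\<xi>0 < U" "e > 0"
  shows "\<exists>\<xi>m \<xi>p. 0 \<le> \<xi>m \<and> \<xi>m < \<xi>0 \<and> \<xi>0 < \<xi>p \<and> \<xi>p < U \<and> \<xi>0 - \<xi>m < e \<and> \<xi>p - \<xi>0 < e"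
proof -
  define p where "p = min (\<xi>0 + e/2) ((\<xi>0 + U)/2)"
  have "p \<le> \<xi>0 + e/2" "p \<le> (\<xi>0 + U)/2" unfolding p_def by (rule min.cobounded1, rule min.cobounded2)
  moreover have "\<xi>0 < p" unfolding p_def using assms by auto
  ultimately show ?thesis using assms
    by (intro exI[of _ "max (\<xi>0 - e/2) (\<xi>0/2)"] exI[of _ p]) auto
qed

theorem mainTheorem5:
  fixes b :: "real \<Rightarrow> real"
  assumes "assumption_A2 b"
  shows "(\<forall>\<gamma>>0. \<exists>!\<xi>. xi_eq b {0..\<gamma>} \<xi>)
       \<and> (\<forall>\<gamma>1 \<gamma>2. 0 < \<gamma>1 \<longrightarrow> \<gamma>1 \<le> \<gamma>2 \<longrightarrow> xi b \<gamma>2 \<le> xi b \<gamma>1)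
       \<and> continuous_on {0<..} (xi b)
       \<and> (\<exists>!\<xi>. xi_eq b {0..} \<xi>)
       \<and> (xi b \<longlongrightarrow> xi_inf b) at_top
       \<and> ((\<lambda>\<gamma>. psi b (1 / xi b \<gamma>)) \<longlongrightarrow> psi b (1 / xi_inf b)) at_top"
proof -
  note A = assms
  have B: "b 0 > 0" using A2_facts(3)[OF A] .
  have bc: "b integrable_on {0..c}" for c
    by (rule integrable_on_subinterval[OF A2_facts(4)[OF A]]) auto
  have ic: "\<And>\<xi>. 0 \<le> \<xi> \<Longrightarrow> \<xi> < 1 / b 0 \<Longrightarrow> xi_integrand b \<xi> integrable_on {0..c}" for c
    using integrand_int(1)[OF A] by auto
  have iI: "\<And>\<xi>. 0 \<le> \<xi> \<Longrightarrow> \<xi> < 1 / b 0 \<Longrightarrow> xi_integrand b \<xi> integrable_on {0..}"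
    using integrand_int(2)[OF A] by auto
  have P1: "\<exists>!\<xi>. xi_eq b {0..\<gamma>} \<xi>" if g: "\<gamma> > 0" for \<gamma>
    by (rule ex1_S[OF A _ bc g _ ic diverge[OF A g]]) auto
  have xg: "xi_eq b {0..\<gamma>} (xi b \<gamma>)" if g: "\<gamma> > 0" for \<gamma>
    unfolding xi_def using theI'[OF P1[OF g]] .
  have P4: "\<exists>!\<xi>. xi_eq b {0..} \<xi>"
  proof (rule ex1_S[OF A _ A2_facts(4)[OF A], where \<gamma>=1])
    obtain \<xi> where x: "0 < \<xi>" "\<xi> < 1 / b 0" "integral {0..1} (xi_integrand b \<xi>) > 1"
      using diverge[OF A, of 1] by auto
    have "integral {0..1} (xi_integrand b \<xi>) \<le> integral {0..} (xi_integrand b \<xi>)"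
      using x ic iI by (intro integral_subset_le) (auto simp: integrand_nonneg)
    then show "\<exists>\<xi>. 0 < \<xi> \<and> \<xi> < 1 / b 0 \<and> integral {0..} (xi_integrand b \<xi>) > 1"
      using x by (intro exI[of _ \<xi>]) auto
  qed (use iI in auto)
  have xinf: "xi_eq b {0..} (xi_inf b)"
    unfolding xi_inf_def using theI'[OF P4] .
  have P2: "xi b \<gamma>2 \<le> xi b \<gamma>1" if g: "0 < \<gamma>1" "\<gamma>1 \<le> \<gamma>2" for \<gamma>1 \<gamma>2
  proof -
    note e1 = xi_eq_F[OF xg[OF g(1)]]
    have "integral {0..\<gamma>1} (xi_integrand b (xi b \<gamma>1)) \<le> integral {0..\<gamma>2} (xi_integrand b (xi b \<gamma>1))"
      using g e1 ic by (intro integral_subset_le) (auto simp: integrand_nonneg)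
    then show ?thesis
      using bracket(4)[OF A _ _ _ ic xg, of \<gamma>2 \<gamma>2 "xi b \<gamma>1"] e1 g by auto
  qed
  have brk: "\<exists>\<xi>m \<xi>p. 0 \<le> \<xi>m \<and> \<xi>m < \<xi>0 \<and> \<xi>0 < \<xi>p \<and> \<xi>p < 1 / b 0 \<and> \<xi>0 - \<xi>m < e \<and> \<xi>p - \<xi>0 < e"
    if "0 < \<xi>0" "\<xi>0 < 1 / b 0" "e > 0" for \<xi>0 e
    using brk0[OF that] .
  have P3: "continuous_on {0<..} (xi b)"
    unfolding continuous_on_iff
  proof (intro ballI allI impI)
    fix \<gamma> e :: real assume g: "\<gamma> \<in> {0<..}" and e: "0 < e"
    then have g: "\<gamma> > 0" by simp
    note e0 = xi_eq_F[OF xg[OF g]]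
    have icg: "\<And>\<xi>. 0 \<le> \<xi> \<Longrightarrow> \<xi> < 1 / b 0 \<Longrightarrow> xi_integrand b \<xi> integrable_on {0..\<gamma>}"
      using ic by auto
    obtain \<xi>m \<xi>p where m: "0 \<le> \<xi>m" "\<xi>m < xi b \<gamma>" "xi b \<gamma> < \<xi>p" "\<xi>p < 1 / b 0"
        "xi b \<gamma> - \<xi>m < e" "\<xi>p - xi b \<gamma> < e"
      using brk[OF e0(1,2) e] by blast
    have Fp: "integral {0..\<gamma>} (xi_integrand b \<xi>p) > 1"
      using F_strict[OF A _ g _ _ _ _ icg[of "xi b \<gamma>"] icg[of \<xi>p]] e0 m by auto
    have Fm: "integral {0..\<gamma>} (xi_integrand b \<xi>m) < 1"
      using F_strict[OF A _ g _ _ _ _ icg[of \<xi>m] icg[of "xi b \<gamma>"]] e0 m by auto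
    obtain d1 where d1: "d1 > 0" "\<forall>s. 0 < s \<longrightarrow> \<bar>s - \<gamma>\<bar> < d1 \<longrightarrow>
      \<bar>integral {0..s} (xi_integrand b \<xi>p) - integral {0..\<gamma>} (xi_integrand b \<xi>p)\<bar>
        < integral {0..\<gamma>} (xi_integrand b \<xi>p) - 1"
      using Fgamma_cont[OF A _ _ g, of \<xi>p "integral {0..\<gamma>} (xi_integrand b \<xi>p) - 1"] Fp m by auto
    obtain d2 where d2: "d2 > 0" "\<forall>s. 0 < s \<longrightarrow> \<bar>s - \<gamma>\<bar> < d2 \<longrightarrow>
      \<bar>integral {0..s} (xi_integrand b \<xi>m) - integral {0..\<gamma>} (xi_integrand b \<xi>m)\<bar>
        < 1 - integral {0..\<gamma>} (xi_integrand b \<xi>m)"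
      using Fgamma_cont[OF A _ _ g, of \<xi>m "1 - integral {0..\<gamma>} (xi_integrand b \<xi>m)"] Fm m by auto
    show "\<exists>d>0. \<forall>s\<in>{0<..}. dist s \<gamma> < d \<longrightarrow> dist (xi b s) (xi b \<gamma>) < e"
    proof (intro exI[of _ "min d1 d2"] conjI ballI impI)
      show "min d1 d2 > 0" using d1 d2 by simp
      fix s assume s: "s \<in> {0<..}" "dist s \<gamma> < min d1 d2"
      then have s0: "s > 0" by simp
      have "integral {0..s} (xi_integrand b \<xi>p) > 1" "integral {0..s} (xi_integrand b \<xi>m) < 1"
        using d1(2)[rule_format, OF s0] d2(2)[rule_format, OF s0] s by (auto simp: dist_real_def)
      then have "xi b s < \<xi>p" "\<xi>m < xi b s"
        using bracket(1,2)[OF A _ s0 _ ic xg[OF s0]] m by auto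
      then show "dist (xi b s) (xi b \<gamma>) < e" using m by (auto simp: dist_real_def)
    qed
  qed
  have P5: "(xi b \<longlongrightarrow> xi_inf b) at_top"
    unfolding tendsto_iff
  proof (intro allI impI)
    fix e :: real assume e: "e > 0"
    note e0 = xi_eq_F[OF xinf]
    obtain \<xi>m \<xi>p where m: "0 \<le> \<xi>m" "\<xi>m < xi_inf b" "xi_inf b < \<xi>p" "\<xi>p < 1 / b 0"
        "xi_inf b - \<xi>m < e" "\<xi>p - xi_inf b < e"
      using brk[OF e0(1,2) e] by blast
    have Fp: "integral {0..} (xi_integrand b \<xi>p) > 1"
      using F_strict[OF A _ _ _ _ _ _ iI[of "xi_inf b"] iI[of \<xi>p], of 1] e0 m by auto
    have Fm: "integral {0..} (xi_integrand b \<xi>m) < 1"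
      using F_strict[OF A _ _ _ _ _ _ iI[of \<xi>m] iI[of "xi_inf b"], of 1] e0 m by auto
    have "\<forall>\<^sub>F n in sequentially. integral {0..real n} (xi_integrand b \<xi>p) > 1"
      using order_tendstoD(1)[OF F_seq_lim[OF A, of \<xi>p] Fp] m by auto
    then obtain N where N: "integral {0..real N} (xi_integrand b \<xi>p) > 1"
      unfolding eventually_sequentially by auto
    show "\<forall>\<^sub>F \<gamma> in at_top. dist (xi b \<gamma>) (xi_inf b) < e"
      unfolding eventually_at_top_linorder
    proof (intro exI[of _ "max (real N) 1"] allI impI)
      fix s assume s: "s \<ge> max (real N) 1"
      then have s0: "s > 0" by simp
      have "integral {0..real N} (xi_integrand b \<xi>p) \<le> integral {0..s} (xi_integrand b \<xi>p)"
        using s ic m by (intro integral_subset_le) (auto simp: integrand_nonneg)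
      moreover have "integral {0..s} (xi_integrand b \<xi>m) \<le> integral {0..} (xi_integrand b \<xi>m)"
        using ic iI m by (intro integral_subset_le) (auto simp: integrand_nonneg)
      ultimately have "integral {0..s} (xi_integrand b \<xi>p) > 1" "integral {0..s} (xi_integrand b \<xi>m) < 1"
        using N Fm by auto
      then have "xi b s < \<xi>p" "\<xi>m < xi b s"
        using bracket(1,2)[OF A _ s0 _ ic xg[OF s0]] m by auto
      then show "dist (xi b s) (xi_inf b) < e" using m by (auto simp: dist_real_def)
    qed
  qed
  have P6: "((\<lambda>\<gamma>. psi b (1 / xi b \<gamma>)) \<longlongrightarrow> psi b (1 / xi_inf b)) at_top"
    using isCont_tendsto_compose[OF psi_isCont[OF A xi_eq_F(1,2)[OF xinf]] P5] .
  show ?thesis using P1 P2 P3 P4 P5 P6 by blast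
qed

end
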